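(* Let $M$ be a commutative monoid and $\mathcal{A}$ an $\mathbb{H}M$-module. For all integers $0<n<r$, $H^n(M,r;\mathcal{A})=0$.
   Context: Let $M$ be a commutative monoid with identity $e$. $\mathbb{H}M$ has objects the elements of $M$ and morphisms $(x,y):x\to xy$, composition $(xy,z)(x,y)=(x,yz)$. An $\mathbb{H}M$-module $\mathcal{A}$ is a functor $\mathbb{H}M\to\mathbf{Ab}$: groups $\mathcal{A}(x)$ with $y_*:\mathcal{A}(x)\to\mathcal{A}(xy)$, $y_*z_*=(yz)_*$, $e_*=\mathrm{id}$. Tensor product $(\mathcal{A}\otimes_{\mathbb{H}M}\mathcal{B})(x)=\bigoplus_{zt=x}\mathcal{A}(z)\otimes\mathcal{B}(t)/(u_*a\otimes b=a\otimes u_*b)$; unit the constant module $\mathbb{Z}$; chain complexes of $\mathbb{H}M$-modules form a symmetric monoidal category with Koszul signs. A commutative DGA-algebra over $\mathbb{H}M$ is a commutative monoid $(\mathcal{A},\circ,\iota)$ there with a monoid morphism $\epsilon:\mathcal{A}\to\mathbb{Z}$, $\epsilon_x(a)=\tilde\epsilon(a)x$. Its reduced bar construction $\mathbf{B}(\mathcal{A})$ has $\mathbf{B}(\mathcal{A})_n(x)$ generated by $[\,]$ (degree $0$) and $[a_1|\cdots|a_p]$ with $a_i\in(\mathrm{coker}\,\iota)_{r_i}(x_i)$, $x_1\cdots x_p=x$, $p+\sum r_i=n$; differential $\partial[a_1|\cdots|a_p]=-\sum_i(-1)^{e_{i-1}}[\cdots|\partial a_i|\cdots]+\tilde\epsilon(a_1)x_{1*}[a_2|\cdots]+\sum_{i<p}(-1)^{e_i}[\cdots|a_i\circ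 a_{i+1}|\cdots]+(-1)^{e_p}\tilde\epsilon(a_p)x_{p*}[\cdots|a_{p-1}]$, $e_i=i+r_1+\cdots+r_i$; multiplication the signed shuffle product $[a_1|\cdots|a_p]\circ[a_{p+1}|\cdots|a_{p+q}]=\sum_\sigma(-1)^{e(\sigma)}[a_{\sigma^{-1}(1)}|\cdots|a_{\sigma^{-1}(p+q)}]$, $e(\sigma)=\sum_{\sigma(i)>\sigma(p+j)}(1+r_i)(1+r_{p+j})$; unit $[\,]$; augmentation $\mathbf{B}(\mathcal{A})_0\cong\mathbb{Z}$. It is again such an algebra, so $\mathbf{B}^r$ is defined. $\mathcal{Z}M$: $\mathcal{Z}M(x)$ free abelian on $\{(u,v):uv=x\}$, $y_*(u,v)=(yu,v)$, $(u,v)\circ(w,t)=(uw,vt)$, unit $(e,e)$, degree $0$, augmentation $(u,v)\mapsto$ generator of $\mathbb{Z}(x)$. $H^n(M,r;\mathcal{A})=H^n(\mathrm{Hom}_{\mathbb{H}M}(\mathbf{B}^r(\mathcal{Z}M),\mathcal{A}))$. *)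

theory Defs
  imports "HOL-Algebra.Group"
begin

text \<open>An HM-module is a family of abelian groups A x (x in M) with homomorphisms
  act x y : A x -> A (x*y)  (the map y_* ), functorial: 1_* = id, y_* z_* = (z*y)_*.\<close>

definition HM_module ::
  "('m::comm_monoid_mult \<Rightarrow> ('a,'b) monoid_scheme) \<Rightarrow> ('m \<Rightarrow> 'm \<Rightarrow> 'a \<Rightarrow> 'a) \<Rightarrow> bool" where
  "HM_module A act \<longleftrightarrow>
     (\<forall>x. comm_group (A x)) \<and>
     (\<forall>x y. act x y \<in> hom (A x) (A (x * y))) \<and>
     (\<forall>x a. a \<in> carrier (A x) \<longrightarrow> act x 1 a = a) \<and>
     (\<forall>x y z a. a \<in> carrier (A x) \<longrightarrow> act (x * z) y (act x z a) = act x (z * y) a)"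

text \<open>Level 0 cells Gen u v are the basis (u,v) of ZM(u*v).  A level r+1 cell is either
  Emp x, the generator x_*[] of B_0(x), or a bar word Wrd [a1,...,ap] (p>0) of level r cells.
  Elements of B^r(ZM) are represented by formal integer combinations of cells, modulo the
  relations given by rels below.\<close>

datatype 'm cell = Gen 'm 'm | Emp 'm | Wrd "'m cell list"

type_synonym 'm fs = "(int \<times> 'm cell) list"

fun deg :: "'m cell \<Rightarrow> nat" where
  "deg (Gen u v) = 0"
| "deg (Emp x) = 0"
| "deg (Wrd cs) = length cs + sum_list (map deg cs)"

fun wt :: "'m::comm_monoid_mult cell \<Rightarrow> 'm" where
  "wt (Gen u v) = u * v"
| "wt (Emp x) = x"
| "wt (Wrd cs) = prod_list (map wt cs)"

fun lev :: "nat \<Rightarrow> 'm cell \<Rightarrow> bool" where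
  "lev 0 c = (case c of Gen u v \<Rightarrow> True | _ \<Rightarrow> False)"
| "lev (Suc r) c = (case c of Emp x \<Rightarrow> True
                     | Wrd cs \<Rightarrow> cs \<noteq> [] \<and> (\<forall>d\<in>set cs. lev r d)
                     | Gen u v \<Rightarrow> False)"

fun act_c :: "'m::comm_monoid_mult \<Rightarrow> 'm cell \<Rightarrow> 'm cell" where
  "act_c y (Gen u v) = Gen (y * u) v"
| "act_c y (Emp x) = Emp (y * x)"
| "act_c y (Wrd []) = Wrd []"
| "act_c y (Wrd (c # cs)) = Wrd (act_c y c # cs)"

text \<open>Cells representing the image of the unit iota (x_*(e,e) = (x,e), resp. x_*[]).\<close>
definition is_unit :: "'m::comm_monoid_mult cell \<Rightarrow> bool" where
  "is_unit c \<longleftrightarrow> (\<exists>x. c = Gen x 1) \<or> (\<exists>x. c = Emp x)"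

fun eps :: "'m cell \<Rightarrow> int" where
  "eps (Gen u v) = 1"
| "eps (Emp x) = 1"
| "eps (Wrd cs) = 0"

definition smul :: "int \<Rightarrow> 'm fs \<Rightarrow> 'm fs" where
  "smul k l = map (\<lambda>(j, c). (k * j, c)) l"

fun shuf :: "'m cell list \<Rightarrow> 'm cell list \<Rightarrow> (int \<times> 'm cell list) list" where
  "shuf [] ys = [(1, ys)]"
| "shuf xs [] = [(1, xs)]"
| "shuf (x # xs) (y # ys) =
     map (\<lambda>(k, w). (k, x # w)) (shuf xs (y # ys)) @
     map (\<lambda>(k, w). ((-1) ^ ((1 + deg y) * sum_list (map (\<lambda>c. 1 + deg c) (x # xs))) * k, y # w))
         (shuf (x # xs) ys)"

text \<open>Products: in ZM, (u,v)o(w,t) = (uw,vt); in a bar construction, [] is the unit and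
  words multiply by the signed shuffle product.\<close>
fun cprod :: "'m::comm_monoid_mult cell \<Rightarrow> 'm cell \<Rightarrow> 'm fs" where
  "cprod (Gen u v) (Gen w t) = [(1, Gen (u * w) (v * t))]"
| "cprod (Emp x) d = [(1, act_c x d)]"
| "cprod c (Emp x) = [(1, act_c x c)]"
| "cprod (Wrd xs) (Wrd ys) = map (\<lambda>(k, w). (k, Wrd w)) (shuf xs ys)"
| "cprod _ _ = []"

definition bar_diff :: "'m::comm_monoid_mult cell list \<Rightarrow> 'm fs list \<Rightarrow> 'm fs" where
  "bar_diff cs ds = (if cs = [] then [] else
     (let p = length cs;
          E = (\<lambda>k. k + sum_list (map deg (take k cs)));
          t1 = concat (map (\<lambda>k. smul (- ((-1) ^ E k))
                  (map (\<lambda>(j, c). (j, Wrd (take k cs @ c # drop (Suc k) cs))) (ds ! k))) [0..<p]);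
          t2 = smul (eps (hd cs))
                  [(1, if p = 1 then Emp (wt (hd cs)) else act_c (wt (hd cs)) (Wrd (tl cs)))];
          t3 = concat (map (\<lambda>k. smul ((-1) ^ E (Suc k))
                  (map (\<lambda>(j, c). (j, Wrd (take k cs @ c # drop (Suc (Suc k)) cs)))
                     (cprod (cs ! k) (cs ! Suc k)))) [0..<p - 1]);
          t4 = smul ((-1) ^ E p * eps (last cs))
                  [(1, if p = 1 then Emp (wt (last cs)) else act_c (wt (last cs)) (Wrd (butlast cs)))]
      in t1 @ t2 @ t3 @ t4))"

fun bd :: "'m::comm_monoid_mult cell \<Rightarrow> 'm fs" where
  "bd (Gen u v) = []"
| "bd (Emp x) = []"
| "bd (Wrd cs) = bar_diff cs (map bd cs)"

text \<open>Generators of the relation subgroup of level r: B^(r+1)(ZM) is the free abelian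
  group on level r+1 cells modulo: letters in the image of iota (cokernel), the
  tensor-over-HM relations between adjacent letters, and relations of level r in a letter.\<close>
inductive is_rel :: "nat \<Rightarrow> 'm::comm_monoid_mult fs \<Rightarrow> bool" where
  coker: "\<lbrakk> \<forall>d\<in>set cs. lev r d; c \<in> set cs; is_unit c \<rbrakk> \<Longrightarrow> is_rel (Suc r) [(1, Wrd cs)]"
| tens: "\<lbrakk> \<forall>d\<in>set (pre @ post). lev r d; lev r c; lev r d \<rbrakk> \<Longrightarrow>
           is_rel (Suc r) [(1, Wrd (pre @ act_c y c # d # post)), (-1, Wrd (pre @ c # act_c y d # post))]"
| slot: "\<lbrakk> is_rel r \<rho>; \<forall>d\<in>set (pre @ post). lev r d \<rbrakk> \<Longrightarrow>
           is_rel (Suc r) (map (\<lambda>(k, c). (k, Wrd (pre @ c # post))) \<rho>)"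

definition lin :: "('m \<Rightarrow> ('a,'b) monoid_scheme) \<Rightarrow> ('m cell \<Rightarrow> 'a) \<Rightarrow> 'm fs \<Rightarrow> 'm \<Rightarrow> 'a" where
  "lin A f l x = foldr (\<lambda>(k, c) acc. (f c [^]\<^bsub>A x\<^esub> k) \<otimes>\<^bsub>A x\<^esub> acc) l \<one>\<^bsub>A x\<^esub>"

text \<open>A degree-n cochain: an HM-linear map B^r(ZM)_n -> A, given by its (extensional) values
  on cells, natural in HM and killing all relations.\<close>
definition cochain ::
  "('m::comm_monoid_mult \<Rightarrow> ('a,'b) monoid_scheme) \<Rightarrow> ('m \<Rightarrow> 'm \<Rightarrow> 'a \<Rightarrow> 'a) \<Rightarrow> nat \<Rightarrow> nat
     \<Rightarrow> ('m cell \<Rightarrow> 'a) \<Rightarrow> bool" where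
  "cochain A act r n f \<longleftrightarrow>
     (\<forall>c. lev r c \<and> deg c = n \<longrightarrow> f c \<in> carrier (A (wt c))) \<and>
     (\<forall>c. \<not> (lev r c \<and> deg c = n) \<longrightarrow> f c = \<one>\<^bsub>A (wt c)\<^esub>) \<and>
     (\<forall>c y. lev r c \<and> deg c = n \<longrightarrow> f (act_c y c) = act (wt c) y (f c)) \<and>
     (\<forall>\<rho> x. is_rel r \<rho> \<and> (\<forall>(k, c)\<in>set \<rho>. wt c = x \<and> deg c = n) \<longrightarrow> lin A f \<rho> x = \<one>\<^bsub>A x\<^esub>)"

definition cobd :: "('m::comm_monoid_mult \<Rightarrow> ('a,'b) monoid_scheme) \<Rightarrow> nat \<Rightarrow> nat
     \<Rightarrow> ('m cell \<Rightarrow> 'a) \<Rightarrow> ('m cell \<Rightarrow> 'a)" where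
  "cobd A r n f = (\<lambda>c. if lev r c \<and> deg c = Suc n then lin A f (bd c) (wt c) else \<one>\<^bsub>A (wt c)\<^esub>)"

definition cohomology_vanishes ::
  "('m::comm_monoid_mult \<Rightarrow> ('a,'b) monoid_scheme) \<Rightarrow> ('m \<Rightarrow> 'm \<Rightarrow> 'a \<Rightarrow> 'a) \<Rightarrow> nat \<Rightarrow> nat \<Rightarrow> bool" where
  "cohomology_vanishes A act r n \<longleftrightarrow>
     (\<forall>f. cochain A act r n f \<and> (\<forall>c. cobd A r n f c = \<one>\<^bsub>A (wt c)\<^esub>) \<longrightarrow>
        (if n = 0 then f = (\<lambda>c. \<one>\<^bsub>A (wt c)\<^esub>)
         else (\<exists>g. cochain A act r (n - 1) g \<and> f = cobd A r (n - 1) g)))"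

end

theory Submission
  imports Defs "HOL-Library.Multiset"
begin

fun ne :: "'m cell \<Rightarrow> bool" where
  "ne (Gen u v) = True"
| "ne (Emp x) = True"
| "ne (Wrd cs) = (cs \<noteq> [] \<and> (\<forall>d\<in>set cs. ne d))"

lemma lev_ne: "lev r c \<Longrightarrow> ne c"
proof (induction r arbitrary: c)
  case 0 then show ?case by (cases c) auto
next
  case (Suc r) then show ?case by (cases c) auto
qed

lemma wt_act: "ne c \<Longrightarrow> wt (act_c y c) = y * wt c"
proof (induction y c rule: act_c.induct)
  case (4 y c cs) then show ?case by (simp add: mult.assoc)
qed (auto simp: mult.assoc)

lemma shuf_mset: "(k, w) \<in> set (shuf xs ys) \<Longrightarrow> mset w = mset xs + mset ys"
proof (induction xs ys arbitrary: k w rule: shuf.induct)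
  case (3 x xs y ys) then show ?case by auto
qed auto

lemma prod_wt_mset: "mset w = mset v \<Longrightarrow> prod_list (map wt w) = prod_list (map wt v)"
  by (metis mset_map prod_mset_prod_list)

lemma cprod_wt: "ne a \<Longrightarrow> ne b \<Longrightarrow> (j, d) \<in> set (cprod a b) \<Longrightarrow> wt d = wt a * wt b"
proof (induction a b rule: cprod.induct)
  case (4 xs ys)
  then obtain k w where kw: "(k, w) \<in> set (shuf xs ys)" "d = Wrd w" by auto
  have "mset w = mset (xs @ ys)" using shuf_mset[OF kw(1)] by simp
  then have "prod_list (map wt w) = prod_list (map wt (xs @ ys))" by (rule prod_wt_mset)
  then show ?case using kw by simp
qed (auto simp: wt_act mult_ac)

lemma smul_set: "(j, d) \<in> set (smul k l) \<Longrightarrow> \<exists>j'. (j', d) \<in> set l"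
  by (auto simp: smul_def)

lemma wt_repl1:
  assumes "k < length cs" "wt c = wt (cs ! k)"
  shows "wt (Wrd (take k cs @ c # drop (Suc k) cs)) = wt (Wrd cs)"
proof -
  have "cs = take k cs @ cs ! k # drop (Suc k) cs" using assms by (simp add: id_take_nth_drop)
  then have "wt (Wrd cs) = wt (Wrd (take k cs @ cs ! k # drop (Suc k) cs))" by simp
  then show ?thesis using assms by simp
qed

lemma wt_repl2:
  assumes "Suc k < length cs" "wt c = wt (cs ! k) * wt (cs ! Suc k)"
  shows "wt (Wrd (take k cs @ c # drop (Suc (Suc k)) cs)) = wt (Wrd cs)"
proof -
  have "cs = take k cs @ cs ! k # drop (Suc k) cs" using assms by (simp add: id_take_nth_drop)
  moreover have "drop (Suc k) cs = cs ! Suc k # drop (Suc (Suc k)) cs"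
    using assms by (simp add: Cons_nth_drop_Suc)
  ultimately have "cs = take k cs @ cs ! k # cs ! Suc k # drop (Suc (Suc k)) cs" by simp
  then have "wt (Wrd cs) = wt (Wrd (take k cs @ cs ! k # cs ! Suc k # drop (Suc (Suc k)) cs))" by simp
  then show ?thesis using assms by (simp add: mult_ac)
qed

lemma bar_diff_wt:
  assumes ne: "\<forall>d\<in>set cs. ne d" and len: "length ds = length cs"
    and ds: "\<And>k j d. k < length cs \<Longrightarrow> (j, d) \<in> set (ds ! k) \<Longrightarrow> wt d = wt (cs ! k)"
    and mem: "(j, d) \<in> set (bar_diff cs ds)"
  shows "wt d = wt (Wrd cs)"
proof -
  have csne: "cs \<noteq> []" using mem by (auto simp: bar_diff_def)
  let ?p = "length cs"
  let ?E = "(\<lambda>k. k + sum_list (map deg (take k cs)))"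
  have t2: "wt (if ?p = 1 then Emp (wt (hd cs)) else act_c (wt (hd cs)) (Wrd (tl cs))) = wt (Wrd cs)"
  proof (cases "?p = 1")
    case True then show ?thesis using csne by (cases cs) auto
  next
    case False
    then have "tl cs \<noteq> []" using csne by (cases cs) auto
    moreover have "\<forall>d\<in>set (tl cs). ne d" using ne by (cases cs) auto
    ultimately show ?thesis using False csne by (cases cs) (auto simp: wt_act)
  qed
  have t4: "wt (if ?p = 1 then Emp (wt (last cs)) else act_c (wt (last cs)) (Wrd (butlast cs))) = wt (Wrd cs)"
  proof (cases "?p = 1")
    case True then show ?thesis using csne by (cases cs) auto
  next
    case False
    then have bl: "butlast cs \<noteq> []" using csne by (cases cs rule: rev_cases) auto
    moreover have "\<forall>d\<in>set (butlast cs). ne d" using ne by (meson in_set_butlastD)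
    ultimately have "wt (act_c (wt (last cs)) (Wrd (butlast cs))) = wt (last cs) * wt (Wrd (butlast cs))"
      by (simp add: wt_act)
    also have "\<dots> = wt (Wrd (butlast cs @ [last cs]))" by (simp add: mult.commute)
    also have "\<dots> = wt (Wrd cs)" using csne by simp
    finally show ?thesis using False by simp
  qed
  have A: "\<forall>x<length cs. \<forall>(j',c)\<in>set (ds ! x). wt (Wrd (take x cs @ c # drop (Suc x) cs)) = wt (Wrd cs)"
    using ds wt_repl1 by blast
  have C: "\<forall>x<length cs - 1. \<forall>(j',c)\<in>set (cprod (cs ! x) (cs ! Suc x)).
             wt (Wrd (take x cs @ c # drop (Suc (Suc x)) cs)) = wt (Wrd cs)"
  proof (intro allI impI ballI, clarify)
    fix x j' c
    assume a: "x < length cs - 1" "(j', c) \<in> set (cprod (cs ! x) (cs ! Suc x))"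
    then have "wt c = wt (cs ! x) * wt (cs ! Suc x)"
    proof -
      have "Suc x < length cs" using a(1) by simp
      then have "ne (cs ! x)" "ne (cs ! Suc x)" using ne by auto
      then show ?thesis using cprod_wt a(2) by blast
    qed
    then show "wt (Wrd (take x cs @ c # drop (Suc (Suc x)) cs)) = wt (Wrd cs)"
      using a(1) wt_repl2[of x cs c] by simp
  qed
  from mem csne A C t2 t4 show ?thesis
    unfolding bar_diff_def Let_def
    apply (simp only: if_False set_append Un_iff set_concat)
    apply (auto simp: smul_def simp del: wt.simps)
    done
qed

lemma bd_wt: "ne c \<Longrightarrow> (j, d) \<in> set (bd c) \<Longrightarrow> wt d = wt c"
proof (induction c arbitrary: j d rule: bd.induct)
  case (3 cs)
  show ?case
    using 3(2,3) by (intro bar_diff_wt[where ds = "map bd cs" and j = j]) (auto intro: 3(1))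
qed auto

lemma degen: "lev r (Wrd cs) \<Longrightarrow> deg (Wrd cs) < r \<Longrightarrow> is_rel r [(1, Wrd cs)]"
proof (induction r arbitrary: cs)
  case 0 then show ?case by simp
next
  case (Suc r)
  have cs: "cs \<noteq> []" "\<forall>d\<in>set cs. lev r d" using Suc.prems(1) by auto
  show ?case
  proof (cases "r = 0")
    case True
    have "\<forall>d\<in>set cs. deg d = 0"
    proof
      fix d assume "d \<in> set cs"
      then have "lev 0 d" using cs True by auto
      then show "deg d = 0" by (cases d) auto
    qed
    then have "sum_list (map deg cs) = 0" by (simp add: sum_list_eq_0_iff)
    then show ?thesis using Suc.prems(2) cs(1) True by simp
  next
    case False
    show ?thesis
    proof (cases "\<exists>c\<in>set cs. is_unit c")
      case True
      then obtain c where "c \<in> set cs" "is_unit c" by blast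
      then show ?thesis using cs by (intro is_rel.coker) auto
    next
      case nu: False
      show ?thesis
      proof (cases "\<exists>d\<in>set cs. deg d < r")
        case True
        then obtain d where d: "d \<in> set cs" "deg d < r" by blast
        then have ld: "lev r d" using cs by auto
        obtain r' where r': "r = Suc r'" using False by (cases r) auto
        from d nu have "\<not> is_unit d" by auto
        then obtain ds where dW: "d = Wrd ds" using ld r'
          by (cases d) (auto simp: is_unit_def)
        have rel: "is_rel r [(1, d)]" using Suc.IH ld d(2) dW by simp
        obtain pre post where pp: "cs = pre @ d # post" using d(1) by (meson split_list)
        have "is_rel (Suc r) (map (\<lambda>(k, c). (k, Wrd (pre @ c # post))) [(1, d)])"
          using rel cs pp by (intro is_rel.slot) auto
        then show ?thesis using pp by simp
      next
        case False
        then have "\<forall>d\<in>set cs. r \<le> deg d" by auto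
        then have "sum_list (map (\<lambda>_. r) cs) \<le> sum_list (map deg cs)"
          by (intro sum_list_mono) auto
        moreover have "sum_list (map (\<lambda>_. r) cs) = length cs * r"
          by (simp add: sum_list_triv)
        moreover have "length cs \<ge> 1" using cs by (cases cs) auto
        ultimately have "r \<le> sum_list (map deg cs)"
          by (metis dual_order.trans mult_1 mult_le_mono1)
        then show ?thesis using Suc.prems(2) cs(1) by (cases cs) auto
      qed
    qed
  qed
qed

lemma lin_one:
  assumes "\<forall>(k, c)\<in>set l. wt c = x" "group (A x)"
  shows "lin A (\<lambda>c. \<one>\<^bsub>A (wt c)\<^esub>) l x = \<one>\<^bsub>A x\<^esub>"
  using assms(1)
proof (induction l)
  case Nil then show ?case by (simp add: lin_def)
next
  case (Cons a l)
  obtain k c where a: "a = (k, c)" by (cases a)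
  have IH: "lin A (\<lambda>c. \<one>\<^bsub>A (wt c)\<^esub>) l x = \<one>\<^bsub>A x\<^esub>" using Cons by auto
  have "wt c = x" using Cons.prems a by auto
  then show ?case using IH a group.int_pow_one[OF assms(2)] monoid.l_one[OF group.is_monoid[OF assms(2)]] monoid.one_closed[OF group.is_monoid[OF assms(2)]]
    by (simp add: lin_def)
qed

theorem corollary5p6:
  fixes A :: "'m::comm_monoid_mult \<Rightarrow> ('a,'b) monoid_scheme"
    and act :: "'m \<Rightarrow> 'm \<Rightarrow> 'a \<Rightarrow> 'a"
    and n r :: nat
  assumes "HM_module A act" and "0 < n" and "n < r"
  shows "cohomology_vanishes A act r n"
proof -
  have grp: "\<And>x. group (A x)" using assms(1) unfolding HM_module_def
    by (meson comm_group.axioms(2))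
  have hom: "\<And>x y. act x y \<in> hom (A x) (A (x * y))" using assms(1) unfolding HM_module_def by blast
  define g where "g = (\<lambda>c::'m cell. \<one>\<^bsub>A (wt c)\<^esub>)"
  have gco: "cochain A act r (n - 1) g"
    unfolding cochain_def
  proof (intro conjI allI impI)
    fix c :: "'m cell" assume "lev r c \<and> deg c = n - 1"
    then show "g c \<in> carrier (A (wt c))" using grp by (simp add: g_def group.is_monoid monoid.one_closed)
  next
    fix c :: "'m cell" show "g c = \<one>\<^bsub>A (wt c)\<^esub>" by (simp add: g_def)
  next
    fix c :: "'m cell" and y assume "lev r c \<and> deg c = n - 1"
    then have "ne c" using lev_ne by blast
    then have "wt (act_c y c) = wt c * y" using wt_act by (simp add: mult.commute)
    then show "g (act_c y c) = act (wt c) y (g c)"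
      using hom_one[OF hom grp grp] by (simp add: g_def)
  next
    fix \<rho> :: "'m fs" and x assume "is_rel r \<rho> \<and> (\<forall>(k, c)\<in>set \<rho>. wt c = x \<and> deg c = n - 1)"
    then have "\<forall>(k, c)\<in>set \<rho>. wt c = x" by auto
    then show "lin A g \<rho> x = \<one>\<^bsub>A x\<^esub>" using lin_one grp unfolding g_def by blast
  qed
  show ?thesis
    unfolding cohomology_vanishes_def
  proof (intro allI impI)
    fix f assume fa: "cochain A act r n f \<and> (\<forall>c. cobd A r n f c = \<one>\<^bsub>A (wt c)\<^esub>)"
    have f1: "f = g"
    proof
      fix c
      show "f c = g c"
      proof (cases "lev r c \<and> deg c = n")
        case False then show ?thesis using fa unfolding cochain_def g_def by blast
      next
        case True
        then obtain cs where cs: "c = Wrd cs" using assms(2,3)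
          by (cases c; cases r) auto
        have rel: "is_rel r [(1, c)]" using degen[of r cs] True assms(3) cs by auto
        then have "lin A f [(1, c)] (wt c) = \<one>\<^bsub>A (wt c)\<^esub>"
          using fa True unfolding cochain_def by auto
        moreover have "f c \<in> carrier (A (wt c))" using fa True unfolding cochain_def by auto
        ultimately show ?thesis
          using grp[of "wt c"] by (simp add: lin_def g_def group.int_pow_1 group.is_monoid monoid.r_one)
      qed
    qed
    have "f = cobd A r (n - 1) g"
    proof
      fix c
      show "f c = cobd A r (n - 1) g c"
      proof (cases "lev r c \<and> deg c = Suc (n - 1)")
        case False then show ?thesis unfolding cobd_def f1 g_def by auto
      next
        case True
        have "\<forall>(k, d)\<in>set (bd c). wt d = wt c" using bd_wt lev_ne True by blast
        then have "lin A g (bd c) (wt c) = \<one>\<^bsub>A (wt c)\<^esub>" using lin_one grp unfolding g_def by blast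
        then show ?thesis using True by (simp add: cobd_def f1 g_def)
      qed
    qed
    then show "if n = 0 then f = (\<lambda>c. \<one>\<^bsub>A (wt c)\<^esub>)
         else (\<exists>g. cochain A act r (n - 1) g \<and> f = cobd A r (n - 1) g)"
      using gco assms(2) by auto
  qed
qed

end
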